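(* Run WSU-UX with $K=2$ and any valid $(\eta,\gamma)$ on the two-phase loss sequence. Let $t>T_1$ be a round with $2^{-m}\le\pi_{t,1}\le 2^{-(m-1)}$ for some positive integer $m$. If arm 2 is pulled at least $k=\frac{2}{\eta}m$ times in rounds $t,t+1,\dots,T$, and $t'$ denotes the round immediately after the $\lceil k\rceil$-th such pull, then $\pi_{t',1}\ge\frac14$.
   Context: WSU-UX. Fix integers $K\ge 2$ and $T\ge 1$ and hyperparameters $\eta,\gamma$. The pair $(\eta,\gamma)$ is called valid if $\eta,\gamma\in(0,1/2)$ and $\eta K/\gamma\le 1/2$. Given a fixed loss sequence $\ell_t\in[0,1]^K$, WSU-UX sets $\pi_{1,i}=1/K$ and in each round $t$: forms $\tilde\pi_{t,i}=(1-\gamma)\pi_{t,i}+\gamma/K$; draws $I_t$ with $\Pr(I_t=i\mid\mathcal F_{t-1})=\tilde\pi_{t,i}$; sets $\hat\ell_{t,i}=\ell_{t,i}\mathbf 1[I_t=i]/\tilde\pi_{t,i}$; and updates $\pi_{t+1,i}=\pi_{t,i}\bigl(1-\eta(\hat\ell_{t,i}-\sum_{j}\pi_{t,j}\hat\ell_{t,j})\bigr)$; $\mathcal F_t$ is the history generated by $I_1,\dots,I_t$. Two-phase loss sequence ($K=2$, $T$ a multiple of $100$, $T_1=T/100$): $\ell_{t,1}=1,\ell_{t,2}=0$ for $1\le t\le T_1$ and $\ell_{t,1}=0,\ell_{t,2}=1$ for $T_1<t\le T$. *)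

theory Defs
  imports Complex_Main
begin

text \<open>Arms are indexed by 1..K, rounds by 1,2,...  A realisation of the random
arm choices is a function I :: nat \<Rightarrow> nat (I t = arm pulled in round t).\<close>

definition valid_params :: "nat \<Rightarrow> real \<Rightarrow> real \<Rightarrow> bool" where
  "valid_params K \<eta> \<gamma> \<longleftrightarrow> 0 < \<eta> \<and> \<eta> < 1/2 \<and> 0 < \<gamma> \<and> \<gamma> < 1/2 \<and> \<eta> * real K / \<gamma> \<le> 1/2"

definition wsu_mix :: "nat \<Rightarrow> real \<Rightarrow> (nat \<Rightarrow> real) \<Rightarrow> nat \<Rightarrow> real" where
  "wsu_mix K \<gamma> p j = (1 - \<gamma>) * p j + \<gamma> / real K"

definition wsu_lhat :: "nat \<Rightarrow> real \<Rightarrow> (nat \<Rightarrow> nat \<Rightarrow> real) \<Rightarrow> nat \<Rightarrow> nat \<Rightarrow> (nat \<Rightarrow> real) \<Rightarrow> nat \<Rightarrow> real" where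
  "wsu_lhat K \<gamma> L t It p j = (if j = It then L t j / wsu_mix K \<gamma> p j else 0)"

definition wsu_step :: "nat \<Rightarrow> real \<Rightarrow> real \<Rightarrow> (nat \<Rightarrow> nat \<Rightarrow> real) \<Rightarrow> nat \<Rightarrow> nat \<Rightarrow> (nat \<Rightarrow> real) \<Rightarrow> nat \<Rightarrow> real" where
  "wsu_step K \<eta> \<gamma> L t It p i =
     p i * (1 - \<eta> * (wsu_lhat K \<gamma> L t It p i - (\<Sum>j = 1..K. p j * wsu_lhat K \<gamma> L t It p j)))"

text \<open>wsu_w n = \<pi>_{n+1}; the update from round n+1 to n+2 uses loss L_{n+1} and arm I_{n+1}.\<close>
primrec wsu_w :: "nat \<Rightarrow> real \<Rightarrow> real \<Rightarrow> (nat \<Rightarrow> nat \<Rightarrow> real) \<Rightarrow> (nat \<Rightarrow> nat) \<Rightarrow> nat \<Rightarrow> nat \<Rightarrow> real" where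
  "wsu_w K \<eta> \<gamma> L I 0 = (\<lambda>i. 1 / real K)"
| "wsu_w K \<eta> \<gamma> L I (Suc n) = wsu_step K \<eta> \<gamma> L (Suc n) (I (Suc n)) (wsu_w K \<eta> \<gamma> L I n)"

text \<open>wsu_pi K \<eta> \<gamma> L I t i = \<pi>_{t,i} for rounds t \<ge> 1.\<close>
definition wsu_pi :: "nat \<Rightarrow> real \<Rightarrow> real \<Rightarrow> (nat \<Rightarrow> nat \<Rightarrow> real) \<Rightarrow> (nat \<Rightarrow> nat) \<Rightarrow> nat \<Rightarrow> nat \<Rightarrow> real" where
  "wsu_pi K \<eta> \<gamma> L I t = wsu_w K \<eta> \<gamma> L I (t - 1)"

text \<open>Two-phase loss sequence (K = 2), T_1 = T div 100.\<close>
definition two_phase_loss :: "nat \<Rightarrow> nat \<Rightarrow> nat \<Rightarrow> real" where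
  "two_phase_loss T t i =
     (if t \<le> T div 100 then (if i = 1 then 1 else 0) else (if i = 2 then 1 else 0))"

end

theory Submission
  imports Defs begin
lemma sum12: "(\<Sum>j=(1::nat)..2. f j) = (f 1 + f 2::real)"
  by (simp add: eval_nat_numeral)
lemma step_I1:
  assumes "p 1 + p 2 = (1::real)"
  shows "wsu_step 2 \<eta> \<gamma> L r 1 p 1 = p 1 * (1 - \<eta> * p 2 * L r 1 / wsu_mix 2 \<gamma> p 1)"
    "wsu_step 2 \<eta> \<gamma> L r 1 p 2 = p 2 * (1 + \<eta> * p 1 * L r 1 / wsu_mix 2 \<gamma> p 1)"
proof -
  have e: "p (Suc 0) = 1 - p 2" using assms by simp
  show "wsu_step 2 \<eta> \<gamma> L r 1 p 1 = p 1 * (1 - \<eta> * p 2 * L r 1 / wsu_mix 2 \<gamma> p 1)"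
    "wsu_step 2 \<eta> \<gamma> L r 1 p 2 = p 2 * (1 + \<eta> * p 1 * L r 1 / wsu_mix 2 \<gamma> p 1)"
    unfolding wsu_step_def wsu_lhat_def sum12 by (simp_all add: e divide_inverse algebra_simps)
qed
lemma step_I2:
  assumes "p 1 + p 2 = (1::real)"
  shows "wsu_step 2 \<eta> \<gamma> L r 2 p 1 = p 1 * (1 + \<eta> * p 2 * L r 2 / wsu_mix 2 \<gamma> p 2)"
    "wsu_step 2 \<eta> \<gamma> L r 2 p 2 = p 2 * (1 - \<eta> * p 1 * L r 2 / wsu_mix 2 \<gamma> p 2)"
proof -
  have e: "p (Suc 0) = 1 - p 2" using assms by simp
  show "wsu_step 2 \<eta> \<gamma> L r 2 p 1 = p 1 * (1 + \<eta> * p 2 * L r 2 / wsu_mix 2 \<gamma> p 2)"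
    "wsu_step 2 \<eta> \<gamma> L r 2 p 2 = p 2 * (1 - \<eta> * p 1 * L r 2 / wsu_mix 2 \<gamma> p 2)"
    unfolding wsu_step_def wsu_lhat_def sum12 by (simp_all add: e divide_inverse algebra_simps)
qed
lemma mix_ge:
  assumes "valid_params 2 \<eta> \<gamma>" "0 \<le> p j"
  shows "wsu_mix 2 \<gamma> p j \<ge> \<gamma>/2" "wsu_mix 2 \<gamma> p j > 0"
  using assms unfolding valid_params_def wsu_mix_def
  by (auto intro!: add_nonneg_pos mult_nonneg_nonneg)

lemma frac_small:
  assumes v: "valid_params 2 \<eta> \<gamma>" and p: "0 \<le> p j" and x: "0 \<le> x" "x \<le> 1"
    and l: "0 \<le> l" "l \<le> 1"
  shows "\<eta> * x * l / wsu_mix 2 \<gamma> p j \<le> 1/2"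
proof -
  have m: "wsu_mix 2 \<gamma> p j \<ge> \<gamma>/2" "wsu_mix 2 \<gamma> p j > 0" using mix_ge[where p=p and j=j, OF v p] by auto
  have e: "0 < \<eta>" "0 < \<gamma>" "\<eta> * 2 / \<gamma> \<le> 1/2" using v unfolding valid_params_def by auto
  have "x * l \<le> 1" using x l by (simp add: mult_le_one)
  hence "\<eta> * x * l \<le> \<eta>" using mult_left_le[of "x*l" \<eta>] e by (simp add: mult.assoc)
  hence "\<eta> * x * l / wsu_mix 2 \<gamma> p j \<le> \<eta> / wsu_mix 2 \<gamma> p j"
    using m by (simp add: divide_right_mono)
  also have "\<dots> \<le> \<eta> / (\<gamma>/2)" using m e by (intro divide_left_mono) auto
  also have "\<dots> \<le> 1/2" using e by simp
  finally show ?thesis .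
qed

lemma loss_bounds: "0 \<le> two_phase_loss T r j" "two_phase_loss T r j \<le> 1"
  unfolding two_phase_loss_def by auto

lemma inv:
  assumes v: "valid_params 2 \<eta> \<gamma>" and arms: "\<And>s. s \<ge> 1 \<Longrightarrow> I s \<in> {1, 2}"
  shows "wsu_w 2 \<eta> \<gamma> (two_phase_loss T) I n 1 > 0 \<and> wsu_w 2 \<eta> \<gamma> (two_phase_loss T) I n 2 > 0
    \<and> wsu_w 2 \<eta> \<gamma> (two_phase_loss T) I n 1 + wsu_w 2 \<eta> \<gamma> (two_phase_loss T) I n 2 = 1"
proof (induction n)
  case 0
  then show ?case by simp
next
  case (Suc n)
  define p where "p = wsu_w 2 \<eta> \<gamma> (two_phase_loss T) I n"
  define L where "L = two_phase_loss T"
  have p: "p 1 > 0" "p 2 > 0" "p 1 + p 2 = 1" using Suc unfolding p_def by auto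
  have W: "wsu_w 2 \<eta> \<gamma> (two_phase_loss T) I (Suc n) = wsu_step 2 \<eta> \<gamma> L (Suc n) (I (Suc n)) p"
    unfolding p_def L_def by simp
  have "I (Suc n) \<in> {1,2}" using arms by simp
  moreover {
    assume i: "I (Suc n) = 1"
    define c where "c = \<eta> * p 2 * L (Suc n) 1 / wsu_mix 2 \<gamma> p 1"
    define d where "d = \<eta> * p 1 * L (Suc n) 1 / wsu_mix 2 \<gamma> p 1"
    have c1: "c \<le> 1/2" unfolding c_def
      using frac_small[OF v, of p 1 "p 2" "L (Suc n) 1"] p loss_bounds unfolding L_def by auto
    have c2: "d \<ge> 0" unfolding d_def
      using mix_ge[OF v, of p 1] p loss_bounds v unfolding L_def valid_params_def by auto
    have c3: "p 1 * c = p 2 * d" unfolding c_def d_def by simp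
    have e1: "wsu_step 2 \<eta> \<gamma> L (Suc n) 1 p 1 = p 1 * (1 - c)" unfolding c_def by (rule step_I1(1)[OF p(3)])
    have e2: "wsu_step 2 \<eta> \<gamma> L (Suc n) 1 p 2 = p 2 * (1 + d)" unfolding d_def by (rule step_I1(2)[OF p(3)])
    have "p 1 * (1 - c) > 0" using p(1) c1 by simp
    moreover have "p 2 * (1 + d) > 0" using p(2) c2 by simp
    moreover have "p 1 * (1 - c) + p 2 * (1 + d) = 1" using p(3) c3 by (simp add: ring_distribs)
    ultimately have ?case unfolding W i e1 e2 by simp
  }
  moreover {
    assume i: "I (Suc n) = 2"
    define c where "c = \<eta> * p 1 * L (Suc n) 2 / wsu_mix 2 \<gamma> p 2"
    define d where "d = \<eta> * p 2 * L (Suc n) 2 / wsu_mix 2 \<gamma> p 2"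
    have c1: "c \<le> 1/2" unfolding c_def
      using frac_small[OF v, of p 2 "p 1" "L (Suc n) 2"] p loss_bounds unfolding L_def by auto
    have c2: "d \<ge> 0" unfolding d_def
      using mix_ge[OF v, of p 2] p loss_bounds v unfolding L_def valid_params_def by auto
    have c3: "p 2 * c = p 1 * d" unfolding c_def d_def by simp
    have e1: "wsu_step 2 \<eta> \<gamma> L (Suc n) 2 p 1 = p 1 * (1 + d)" unfolding d_def by (rule step_I2(1)[OF p(3)])
    have e2: "wsu_step 2 \<eta> \<gamma> L (Suc n) 2 p 2 = p 2 * (1 - c)" unfolding c_def by (rule step_I2(2)[OF p(3)])
    have "p 2 * (1 - c) > 0" using p(2) c1 by simp
    moreover have "p 1 * (1 + d) > 0" using p(1) c2 by simp
    moreover have "p 1 * (1 + d) + p 2 * (1 - c) = 1" using p(3) c3 by (simp add: ring_distribs)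
    ultimately have ?case unfolding W i e1 e2 by simp
  }
  ultimately show ?case by blast
qed
lemma phase2:
  assumes v: "valid_params 2 \<eta> \<gamma>" and arms: "\<And>s. s \<ge> 1 \<Longrightarrow> I s \<in> {1, 2}"
    and r: "T div 100 < r"
  defines "W \<equiv> wsu_w 2 \<eta> \<gamma> (two_phase_loss T) I"
  shows "W r 1 = (if I r = 2 then W (r-1) 1 * (1 + \<eta> * W (r-1) 2 / wsu_mix 2 \<gamma> (W (r-1)) 2)
                  else W (r-1) 1)"
proof -
  obtain n where n: "r = Suc n" using r by (cases r) auto
  have p: "W n 1 + W n 2 = 1" using inv[where I=I and T=T and n=n, OF v arms] unfolding W_def by blast
  have Wr: "W r = wsu_step 2 \<eta> \<gamma> (two_phase_loss T) (Suc n) (I (Suc n)) (W n)"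
    unfolding W_def n by simp
  have L1: "two_phase_loss T (Suc n) 1 = 0" and L2: "two_phase_loss T (Suc n) 2 = 1"
    using r n unfolding two_phase_loss_def by auto
  have "I (Suc n) \<in> {1,2}" using arms by simp
  then show ?thesis
  proof
    assume i: "I (Suc n) = 1"
    show ?thesis unfolding Wr i step_I1(1)[OF p] L1 using i n by simp
  next
    assume "I (Suc n) \<in> {2}"
    hence i: "I (Suc n) = 2" by simp
    show ?thesis unfolding Wr i step_I2(1)[OF p] L2 using i n by simp
  qed
qed

lemma mult_bounds:
  assumes v: "valid_params 2 \<eta> \<gamma>" and a: "p 1 > 0" "p 2 > 0" "p 1 + p 2 = (1::real)"
  defines "q \<equiv> 1 + \<eta> * p 2 / wsu_mix 2 \<gamma> p 2"
  shows "q \<ge> 1" "p 1 < 1/4 \<Longrightarrow> q \<ge> 1 + \<eta>"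
proof -
  have e: "0 < \<eta>" "0 < \<gamma>" "\<gamma> < 1/2" using v unfolding valid_params_def by auto
  have m: "wsu_mix 2 \<gamma> p 2 = (1-\<gamma>)*p 2 + \<gamma>/2"
    unfolding wsu_mix_def by simp
  have mp: "(1-\<gamma>)*p 2 + \<gamma>/2 > 0" using e a by (intro add_nonneg_pos) auto
  show "q \<ge> 1" unfolding q_def m using e a mp by simp
  assume "p 1 < 1/4"
  hence "p 2 \<ge> 1/2" using a by simp
  hence "(1-\<gamma>)*p 2 + \<gamma>/2 \<le> p 2" using e by (simp add: algebra_simps)
  hence "p 2 / ((1-\<gamma>)*p 2 + \<gamma>/2) \<ge> 1" using mp by simp
  hence "\<eta> * (p 2 / ((1-\<gamma>)*p 2 + \<gamma>/2)) \<ge> \<eta> * 1" using e by (intro mult_left_mono) auto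
  thus "q \<ge> 1 + \<eta>" unfolding q_def m by (simp add: mult.assoc)
qed
lemma pow_bound:
  fixes \<eta> :: real and k m :: nat
  assumes e: "0 < \<eta>" "\<eta> < 1/2" and k: "real k \<ge> 2 / \<eta> * real m"
  shows "(1/2)^m * (1+\<eta>)^k \<ge> 1/4"
proof -
  have l: "\<eta> - \<eta>^2 \<le> ln (1+\<eta>)" using e by (intro ln_one_plus_pos_lower_bound) auto
  have "\<eta>^2 \<le> \<eta>/2" using e by (simp add: power2_eq_square)
  hence l2: "\<eta>/2 \<le> ln (1+\<eta>)" using l by simp
  have "real m = (2 / \<eta> * real m) * (\<eta>/2)" using e by simp
  also have "\<dots> \<le> real k * ln (1+\<eta>)"
    using k l2 e by (intro mult_mono) auto
  finally have "real m \<le> ln ((1+\<eta>)^k)" by (simp add: ln_realpow)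
  moreover have "ln ((2::real)^m) \<le> real m" using ln_2_less_1 mult_left_mono[of "ln 2" 1 "real m"] by (simp add: ln_realpow)
  ultimately have "ln ((2::real)^m) \<le> ln ((1+\<eta>)^k)" by simp
  hence "(2::real)^m \<le> (1+\<eta>)^k" using e by simp
  hence "(1/2)^m * (2::real)^m \<le> (1/2)^m * (1+\<eta>)^k" by (intro mult_left_mono) auto
  moreover have "(1/2::real)^m * 2^m = 1" by (simp add: power_mult_distrib[symmetric])
  ultimately show ?thesis by simp
qed

theorem mainTheorem16:
  fixes T t m s :: nat and \<eta> \<gamma> :: real and I :: "nat \<Rightarrow> nat"
  assumes valid: "valid_params 2 \<eta> \<gamma>"
    and T_mult: "T \<ge> 1" "100 dvd T"
    and arms: "\<And>s. s \<ge> 1 \<Longrightarrow> I s \<in> {1, 2}"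
    and t_range: "T div 100 < t" "t \<le> T"
    and m_pos: "m \<ge> 1"
    and pi_lo: "(1/2) ^ m \<le> wsu_pi 2 \<eta> \<gamma> (two_phase_loss T) I t 1"
    and pi_hi: "wsu_pi 2 \<eta> \<gamma> (two_phase_loss T) I t 1 \<le> (1/2) ^ (m - 1)"
    and enough: "real (card {s \<in> {t..T}. I s = 2}) \<ge> 2 / \<eta> * real m"
    and s_kth: "s \<in> {t..T}" "I s = 2"
      "card {r \<in> {t..s}. I r = 2} = nat \<lceil>2 / \<eta> * real m\<rceil>"
  shows "wsu_pi 2 \<eta> \<gamma> (two_phase_loss T) I (s + 1) 1 \<ge> 1/4"
proof -
  define W where "W = wsu_w 2 \<eta> \<gamma> (two_phase_loss T) I"
  define C where "C = (\<lambda>n. card {x \<in> {t..<t+n}. I x = 2})"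
  have e: "0 < \<eta>" "\<eta> < 1/2" using valid unfolding valid_params_def by auto
  have t1: "t \<ge> 1" using t_range by simp
  have claim: "W (t - 1 + n) 1 \<ge> min (1/4) (W (t-1) 1 * (1+\<eta>)^C n)" for n
  proof (induction n)
    case 0
    have "(1+\<eta>)^C 0 = 1" unfolding C_def by simp
    then show ?case by simp
  next
    case (Suc n)
    define r where "r = t + n"
    have rr: "r - 1 = t - 1 + n" "t - 1 + Suc n = r" using t1 unfolding r_def by auto
    have rT: "T div 100 < r" using t_range unfolding r_def by simp
    have ph: "W r 1 = (if I r = 2 then W (r-1) 1 * (1 + \<eta> * W (r-1) 2 / wsu_mix 2 \<gamma> (W (r-1)) 2)
                  else W (r-1) 1)" unfolding W_def by (rule phase2[OF valid arms rT])
    have iv: "W (r-1) 1 > 0" "W (r-1) 2 > 0" "W (r-1) 1 + W (r-1) 2 = 1"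
      using inv[where I=I and T=T and n="r-1", OF valid arms] unfolding W_def by auto
    note mb = mult_bounds[OF valid iv]
    have Cs: "C (Suc n) = (if I r = 2 then Suc (C n) else C n)"
    proof -
      have "{x \<in> {t..<t+Suc n}. I x = 2} = (if I r = 2 then insert r {x \<in> {t..<t+n}. I x = 2}
          else {x \<in> {t..<t+n}. I x = 2})" unfolding r_def by (auto simp: less_Suc_eq)
      thus ?thesis unfolding C_def r_def by auto
    qed
    define A where "A = W (t-1) 1"
    have A0: "A > 0" using inv[where I=I and T=T and n="t-1", OF valid arms] unfolding W_def A_def by auto
    show ?case
    proof (cases "I r = 2")
      case False
      then show ?thesis using Suc ph Cs rr by simp
    next
      case True
      define q where "q = 1 + \<eta> * W (r-1) 2 / wsu_mix 2 \<gamma> (W (r-1)) 2"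
      have Wr: "W r 1 = W (r-1) 1 * q" using ph True unfolding q_def by simp
      have IH: "W (r-1) 1 \<ge> min (1/4) (A * (1+\<eta>)^C n)" using Suc rr unfolding A_def by simp
      show ?thesis
      proof (cases "W (r-1) 1 < 1/4")
        case True
        have q1: "q \<ge> 1 + \<eta>" using mb(2)[OF True] unfolding q_def .
        have "A * (1+\<eta>)^C n \<le> W (r-1) 1" using IH True by (simp add: min_def split: if_splits)
        hence "A * (1+\<eta>)^C n * (1+\<eta>) \<le> W (r-1) 1 * q"
          using q1 e iv by (intro mult_mono) auto
        hence "A * (1+\<eta>)^C (Suc n) \<le> W r 1" using Wr Cs \<open>I r = 2\<close> by (simp add: mult_ac)
        thus ?thesis using rr unfolding A_def by simp
      next
        case False
        have q1: "q \<ge> 1" using mb(1) unfolding q_def .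
        have "W (r-1) 1 * 1 \<le> W (r-1) 1 * q" using q1 iv by (intro mult_left_mono) auto
        hence "1/4 \<le> W r 1" using False Wr by linarith
        thus ?thesis using rr by simp
      qed
    qed
  qed
  have st: "t \<le> s" using s_kth by simp
  have sn: "t - 1 + (s + 1 - t) = s" using st t1 by simp
  have Cn: "C (s + 1 - t) = nat \<lceil>2 / \<eta> * real m\<rceil>"
  proof -
    have "{t..<t + (s + 1 - t)} = {t..s}" using st by auto
    thus ?thesis unfolding C_def using s_kth(3) by simp
  qed
  have kk: "real (nat \<lceil>2 / \<eta> * real m\<rceil>) \<ge> 2 / \<eta> * real m" by linarith
  have A: "W (t-1) 1 \<ge> (1/2)^m" using pi_lo unfolding wsu_pi_def W_def .
  have "(1/2)^m * (1+\<eta>)^(nat \<lceil>2 / \<eta> * real m\<rceil>) \<ge> 1/4" by (rule pow_bound[OF e kk])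
  also have "(1/2)^m * (1+\<eta>)^(nat \<lceil>2 / \<eta> * real m\<rceil>) \<le> W (t-1) 1 * (1+\<eta>)^(nat \<lceil>2 / \<eta> * real m\<rceil>)"
    using A e by (intro mult_right_mono) auto
  finally have "min (1/4) (W (t-1) 1 * (1+\<eta>)^C (s+1-t)) \<ge> 1/4" unfolding Cn by simp
  hence "W s 1 \<ge> 1/4" using claim[of "s+1-t"] unfolding sn by linarith
  thus ?thesis unfolding wsu_pi_def W_def by simp
qed
end
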